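(* Let $\{(x_n,y_n)\}_{n=1}^k\subset(\mathbb Q\cap(0,1))\times(\mathbb Q\cap(0,1))$ with $x_m\ne x_n$ for $m\ne n$ and $y_m\ge y_n$ whenever $x_m\ge x_n$. Then there exists a binary digit vector $\vec B$ such that $F_{\vec B}(x_n)=y_n$ for all $n=1,\dots,k$.
   Context: A binary digit vector of length (scale factor) $N\ge3$ is $\vec B=(b_0,\dots,b_{N-1})\in\{0,1\}^N$ with $2\le\|\vec B\|:=\sum_i b_i\le N-1$; its digit set is $D=\{i:b_i=1\}$. With $\phi_d(x)=(x+d)/N$ for $d\in D$, let $\mu_{\vec B}$ be the unique Borel probability measure with $\mu_{\vec B}=\frac{1}{\|\vec B\|}\sum_{d\in D}\mu_{\vec B}\circ\phi_d^{-1}$, supported on the attractor $C_{\vec B}\subset[0,1]$. The CDF is $F_{\vec B}(x)=\mu_{\vec B}([0,x])$, $x\in[0,1]$. The scale factor $N$ of $\vec B$ is not prescribed. *)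

theory Defs
  imports "HOL-Probability.Probability"
begin

definition digit_set :: "nat list \<Rightarrow> nat set" where
  "digit_set B = {i. i < length B \<and> B ! i = 1}"

definition bnorm :: "nat list \<Rightarrow> nat" where
  "bnorm B = sum_list B"

definition binary_digit_vector :: "nat list \<Rightarrow> bool" where
  "binary_digit_vector B \<longleftrightarrow>
     length B \<ge> 3 \<and> set B \<subseteq> {0, 1} \<and> 2 \<le> bnorm B \<and> bnorm B \<le> length B - 1"

definition phi :: "nat list \<Rightarrow> nat \<Rightarrow> real \<Rightarrow> real" where
  "phi B d x = (x + real d) / real (length B)"

definition self_similar :: "nat list \<Rightarrow> real measure \<Rightarrow> bool" where
  "self_similar B \<mu> \<longleftrightarrow>
     sets \<mu> = sets borel \<and> prob_space \<mu> \<and>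
     (\<forall>A \<in> sets borel.
        emeasure \<mu> A = (\<Sum>d\<in>digit_set B. emeasure \<mu> (phi B d -` A)) / ennreal (real (bnorm B)))"

definition mu_B :: "nat list \<Rightarrow> real measure" where
  "mu_B B = (THE \<mu>. self_similar B \<mu>)"

definition cdf_B :: "nat list \<Rightarrow> real \<Rightarrow> real" where
  "cdf_B B x = measure (mu_B B) {0..x}"

end

theory Submission
  imports Defs
begin


definition Top :: "nat \<Rightarrow> nat set \<Rightarrow> (real \<Rightarrow> real) \<Rightarrow> real \<Rightarrow> real" where
  "Top N D F x = (\<Sum>d\<in>D. F (real N * x - real d)) / real (card D)"

lemma Top_contr:
  assumes fin: "finite D" and DN: "D \<subseteq> {..<N}" and cD: "card D \<ge> 2"
    and Hz: "\<And>y. y < 0 \<or> y \<ge> 1 \<Longrightarrow> H y = 0"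
    and Hc: "\<And>y. \<bar>H y\<bar> \<le> c"
  shows "\<bar>Top N D H x\<bar> \<le> c / 2"
proof -
  have c0: "c \<ge> 0" using Hc[of 0] by simp
  define a where "a = \<lfloor>real N * x\<rfloor>"
  have "(\<Sum>d\<in>D. H (real N * x - real d)) = (\<Sum>d\<in>D. if int d = a then H (real N * x - real d) else 0)"
  proof (rule sum.cong)
    fix d assume "d \<in> D"
    show "H (real N * x - real d) = (if int d = a then H (real N * x - real d) else 0)"
    proof (cases "int d = a")
      case False
      then have "int d < a \<or> int d > a" by auto
      then show ?thesis
      proof
        assume "int d < a" then have "int d + 1 \<le> a" by simp
        then have "real d + 1 \<le> real_of_int a" by linarith
        moreover have "real_of_int a \<le> real N * x" unfolding a_def by simp
        ultimately show ?thesis using Hz[of "real N * x - real d"] False by simp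
      next
        assume "int d > a" then have "int d \<ge> a + 1" by simp
        then have "real d \<ge> real_of_int a + 1" by linarith
        moreover have "real N * x < real_of_int a + 1" unfolding a_def by linarith
        ultimately show ?thesis using Hz[of "real N * x - real d"] False by simp
      qed
    qed simp
  qed simp
  also have "\<dots> = (\<Sum>d\<in>{d\<in>D. int d = a}. H (real N * x - real d))"
    by (simp add: sum.inter_filter fin)
  finally have eq: "(\<Sum>d\<in>D. H (real N * x - real d)) = (\<Sum>d\<in>{d\<in>D. int d = a}. H (real N * x - real d))" .
  have sub: "{d\<in>D. int d = a} \<subseteq> {nat a}" by auto
  have cle: "card {d\<in>D. int d = a} \<le> 1"
    using card_mono[OF _ sub] by simp
  have "\<bar>\<Sum>d\<in>{d\<in>D. int d = a}. H (real N * x - real d)\<bar> \<le> (\<Sum>d\<in>{d\<in>D. int d = a}. \<bar>H (real N * x - real d)\<bar>)"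
    by (rule sum_abs)
  also have "\<dots> \<le> (\<Sum>d\<in>{d\<in>D. int d = a}. c)" by (rule sum_mono) (rule Hc)
  also have "\<dots> = real (card {d\<in>D. int d = a}) * c" by simp
  also have "\<dots> \<le> 1 * c" using cle c0 by (intro mult_right_mono) auto
  finally have S: "\<bar>\<Sum>d\<in>D. H (real N * x - real d)\<bar> \<le> c" using eq by simp
  have "\<bar>Top N D H x\<bar> = \<bar>\<Sum>d\<in>D. H (real N * x - real d)\<bar> / real (card D)"
    unfolding Top_def by simp
  also have "\<dots> \<le> c / real (card D)" using S by (intro divide_right_mono) auto
  also have "\<dots> \<le> c / 2" using cD c0 by (intro divide_left_mono) auto
  finally show ?thesis .
qed

lemma Top_zero_outside:
  assumes fin: "finite D" and DN: "D \<subseteq> {..<N}"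
    and Hz: "\<And>y. y < 0 \<or> y \<ge> 1 \<Longrightarrow> H y = 0" and x: "x < 0 \<or> x \<ge> 1"
  shows "Top N D H x = 0"
  unfolding Top_def
proof -
  have "(\<Sum>d\<in>D. H (real N * x - real d)) = 0"
  proof (rule sum.neutral, rule ballI)
    fix d assume d: "d \<in> D"
    with DN have dN: "d < N" by auto
    then have "real d + 1 \<le> real N" by linarith
    from x show "H (real N * x - real d) = 0"
    proof
      assume "x < 0" then have "real N * x < 0" using dN by (simp add: mult_pos_neg)
      then show ?thesis using Hz by simp
    next
      assume "x \<ge> 1" then have "real N * x \<ge> real N" using dN
        by (metis mult.right_neutral mult_left_mono of_nat_0_le_iff)
      then have "real N * x - real d \<ge> 1" using \<open>real d + 1 \<le> real N\<close> by linarith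
      then show ?thesis using Hz by simp
    qed
  qed
  then show "(\<Sum>d\<in>D. H (real N * x - real d)) / real (card D) = 0" by simp
qed

lemma Top_diff: "Top N D F x - Top N D G x = Top N D (\<lambda>y. F y - G y) x"
  unfolding Top_def by (simp add: sum_subtractf diff_divide_distrib)

lemma bnorm_card:
  assumes "set B \<subseteq> {0, 1}"
  shows "bnorm B = card (digit_set B)"
proof -
  have "bnorm B = (\<Sum>i\<in>{0..<length B}. B ! i)" unfolding bnorm_def by (rule sum_list_sum_nth)
  also have "\<dots> = (\<Sum>i\<in>{0..<length B}. if B ! i = 1 then 1 else 0)"
  proof (rule sum.cong)
    fix i assume "i \<in> {0..<length B}"
    then have "B ! i \<in> {0,1}" using assms nth_mem by fastforce
    then show "B ! i = (if B ! i = 1 then 1 else 0)" by auto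
  qed simp
  also have "\<dots> = card {i\<in>{0..<length B}. B ! i = 1}"
    by (simp add: sum.If_cases) (intro arg_cong[where f=card], auto)
  also have "{i\<in>{0..<length B}. B ! i = 1} = digit_set B" unfolding digit_set_def by (auto simp del: One_nat_def)
  finally show ?thesis .
qed

lemma digit_set_sub: "digit_set B \<subseteq> {..<length B}" "finite (digit_set B)"
  unfolding digit_set_def by auto

lemma ss_cdf:
  assumes ss: "self_similar B \<mu>" and bd: "binary_digit_vector B"
  shows "real_distribution \<mu>"
    and "cdf \<mu> x = Top (length B) (digit_set B) (cdf \<mu>) x"
proof -
  have sets: "sets \<mu> = sets borel" and ps: "prob_space \<mu>" and
    eq: "\<And>A. A \<in> sets borel \<Longrightarrow> emeasure \<mu> A = (\<Sum>d\<in>digit_set B. emeasure \<mu> (phi B d -` A)) / ennreal (real (bnorm B))"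
    using ss unfolding self_similar_def by auto
  show rd: "real_distribution \<mu>" unfolding real_distribution_def real_distribution_axioms_def
    using sets ps by simp
  interpret real_distribution \<mu> by (rule rd)
  let ?N = "length B" and ?D = "digit_set B"
  have cardD: "card ?D = bnorm B" using bnorm_card bd unfolding binary_digit_vector_def by simp
  have M2: "bnorm B \<ge> 2" using bd unfolding binary_digit_vector_def by simp
  have N0: "real ?N > 0" using bd unfolding binary_digit_vector_def by auto
  have pre: "phi B d -` {..x} = {..real ?N * x - real d}" for d
  proof -
    have "(t + real d) / real ?N \<le> x \<longleftrightarrow> t \<le> real ?N * x - real d" for t
      using N0 by (simp add: divide_le_eq algebra_simps)
    then show ?thesis unfolding phi_def by auto
  qed
  have "ennreal (cdf \<mu> x) = emeasure \<mu> {..x}"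
    unfolding cdf_def by (simp add: emeasure_eq_measure)
  also have "\<dots> = (\<Sum>d\<in>?D. emeasure \<mu> {..real ?N * x - real d}) / ennreal (real (bnorm B))"
    using eq[of "{..x}"] pre by simp
  also have "\<dots> = (\<Sum>d\<in>?D. ennreal (cdf \<mu> (real ?N * x - real d))) / ennreal (real (bnorm B))"
    unfolding cdf_def by (simp add: emeasure_eq_measure)
  also have "\<dots> = ennreal (\<Sum>d\<in>?D. cdf \<mu> (real ?N * x - real d)) / ennreal (real (bnorm B))"
    by (subst sum_ennreal) (auto intro: cdf_nonneg)
  also have "\<dots> = ennreal ((\<Sum>d\<in>?D. cdf \<mu> (real ?N * x - real d)) / real (bnorm B))"
    using M2 by (intro divide_ennreal) (auto intro: sum_nonneg cdf_nonneg)
  finally have "ennreal (cdf \<mu> x) = ennreal ((\<Sum>d\<in>?D. cdf \<mu> (real ?N * x - real d)) / real (bnorm B))" .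
  then have "cdf \<mu> x = (\<Sum>d\<in>?D. cdf \<mu> (real ?N * x - real d)) / real (bnorm B)"
    by (subst (asm) ennreal_inj) (auto intro!: sum_nonneg cdf_nonneg divide_nonneg_nonneg)
  then show "cdf \<mu> x = Top ?N ?D (cdf \<mu>) x" unfolding Top_def cardD .
qed

lemma pow_ge_n: assumes "N \<ge> (2::nat)" shows "real N ^ n \<ge> real n"
proof -
  have "n < 2 ^ n" by (rule less_exp)
  also have "(2::nat) ^ n \<le> N ^ n" using assms by (rule power_mono) simp
  finally have "n \<le> N ^ n" by simp
  then show ?thesis by (metis of_nat_le_iff of_nat_power)
qed

lemma support:
  assumes fin: "finite D" and DN: "D \<subseteq> {..<N}" and cD: "card D \<ge> 2"
    and mono: "\<And>x y. x \<le> y \<Longrightarrow> F x \<le> F y"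
    and F0: "\<And>x. 0 \<le> F x" and F1: "\<And>x. F x \<le> 1"
    and bot: "(F \<longlongrightarrow> 0) at_bot" and top: "(F \<longlongrightarrow> 1) at_top"
    and rc: "continuous (at_right 1) F"
    and fx: "\<And>x. F x = Top N D F x"
  shows "y < 0 \<Longrightarrow> F y = 0" and "y \<ge> 1 \<Longrightarrow> F y = 1"
proof -
  have "card D \<le> card {..<N}" using DN by (intro card_mono) auto
  then have N2: "N \<ge> 2" using cD by simp
  have cpos: "real (card D) > 0" using cD by simp
  have step1: "F x \<le> F (real N * x)" for x
  proof -
    have "F x = (\<Sum>d\<in>D. F (real N * x - real d)) / real (card D)" using fx unfolding Top_def by metis
    also have "\<dots> \<le> (\<Sum>d\<in>D. F (real N * x)) / real (card D)"
      by (intro divide_right_mono sum_mono mono) auto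
    also have "\<dots> = F (real N * x)" using cpos by simp
    finally show ?thesis .
  qed
  have ind1: "F x \<le> F (real N ^ n * x)" for n x
  proof (induction n)
    case (Suc n)
    then show ?case using step1[of "real N ^ n * x"] by (simp add: mult.assoc)
  qed simp
  have step2: "F (real N * (x - 1) + 1) \<le> F x" for x
  proof -
    have "F (real N * (x - 1) + 1) = (\<Sum>d\<in>D. F (real N * (x - 1) + 1)) / real (card D)" using cpos by simp
    also have "\<dots> \<le> (\<Sum>d\<in>D. F (real N * x - real d)) / real (card D)"
    proof (intro divide_right_mono sum_mono mono)
      fix d assume "d \<in> D" then have "d < N" using DN by auto
      then have "real d + 1 \<le> real N" by linarith
      then show "real N * (x - 1) + 1 \<le> real N * x - real d" by (simp add: algebra_simps)
    qed simp
    also have "\<dots> = F x" using fx unfolding Top_def by metis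
    finally show ?thesis .
  qed
  have ind2: "F (real N ^ n * (x - 1) + 1) \<le> F x" for n x
  proof (induction n)
    case (Suc n)
    have "F (real N ^ Suc n * (x - 1) + 1) = F (real N * ((real N ^ n * (x - 1) + 1) - 1) + 1)"
      by (simp add: mult.assoc)
    also have "\<dots> \<le> F (real N ^ n * (x - 1) + 1)" by (rule step2)
    finally show ?case using Suc by simp
  qed simp
  show neg: "F y = 0" if y: "y < 0" for y
  proof (rule ccontr)
    assume "F y \<noteq> 0" then have pos: "F y > 0" using F0[of y] by simp
    from order_tendstoD(2)[OF bot pos] obtain b where b: "\<And>z. z \<le> b \<Longrightarrow> F z < F y"
      unfolding eventually_at_bot_linorder by auto
    define n where "n = nat \<lceil>b / y\<rceil>"
    have "real n \<ge> b / y" unfolding n_def by linarith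
    then have "real N ^ n \<ge> b / y" using pow_ge_n[OF N2, of n] by linarith
    then have "real N ^ n * y \<le> (b / y) * y" using y by (intro mult_right_mono_neg) auto
    then have "real N ^ n * y \<le> b" using y by simp
    then have "F (real N ^ n * y) < F y" by (rule b)
    with ind1[of y n] show False by simp
  qed
  have gt1: "F y = 1" if y: "y > 1" for y
  proof (rule ccontr)
    assume "F y \<noteq> 1" then have lt: "F y < 1" using F1[of y] by simp
    from order_tendstoD(1)[OF top lt] obtain b where b: "\<And>z. z \<ge> b \<Longrightarrow> F z > F y"
      unfolding eventually_at_top_linorder by auto
    define n where "n = nat \<lceil>b / (y - 1)\<rceil>"
    have "real n \<ge> b / (y - 1)" unfolding n_def by linarith
    then have "real N ^ n \<ge> b / (y - 1)" using pow_ge_n[OF N2, of n] by linarith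
    then have "real N ^ n * (y - 1) \<ge> (b / (y - 1)) * (y - 1)" using y by (intro mult_right_mono) auto
    then have "real N ^ n * (y - 1) + 1 \<ge> b" using y by simp
    then have "F (real N ^ n * (y - 1) + 1) > F y" by (rule b)
    with ind2[of n y] show False by simp
  qed
  show "F y = 1" if y: "y \<ge> 1" for y
  proof (cases "y = 1")
    case True
    have l1: "(F \<longlongrightarrow> F 1) (at_right 1)" using rc by (simp add: continuous_within)
    have "\<forall>\<^sub>F z in at_right (1::real). F z = 1"
      using eventually_at_right_less[of "1::real"] by eventually_elim (rule gt1)
    then have l2: "(F \<longlongrightarrow> 1) (at_right 1)" by (rule tendsto_eventually)
    have "F 1 = 1" using tendsto_unique[OF _ l1 l2] by simp
    then show ?thesis using True by simp
  next
    case False then show ?thesis using y gt1 by simp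
  qed
qed

lemma bdv_facts:
  assumes "binary_digit_vector B"
  shows "finite (digit_set B)" "digit_set B \<subseteq> {..<length B}" "card (digit_set B) \<ge> 2"
    "card (digit_set B) = bnorm B"
  using assms digit_set_sub bnorm_card unfolding binary_digit_vector_def by auto

lemma ss_class:
  assumes ss: "self_similar B \<mu>" and bd: "binary_digit_vector B"
  shows "y < 0 \<Longrightarrow> cdf \<mu> y = 0" and "y \<ge> 1 \<Longrightarrow> cdf \<mu> y = 1"
proof -
  interpret real_distribution \<mu> by (rule ss_cdf(1)[OF ss bd])
  note sup = support[OF bdv_facts(1-3)[OF bd], of "cdf \<mu>", OF cdf_nondecreasing cdf_nonneg cdf_bounded_prob
     cdf_lim_at_bot cdf_lim_at_top_prob cdf_is_right_cont ss_cdf(2)[OF ss bd]]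
  show "y < 0 \<Longrightarrow> cdf \<mu> y = 0" by (rule sup(1))
  show "y \<ge> 1 \<Longrightarrow> cdf \<mu> y = 1" by (rule sup(2))
qed

lemma unique_ss:
  assumes bd: "binary_digit_vector B" and s1: "self_similar B \<mu>1" and s2: "self_similar B \<mu>2"
  shows "\<mu>1 = \<mu>2"
proof -
  interpret r1: real_distribution \<mu>1 by (rule ss_cdf(1)[OF s1 bd])
  interpret r2: real_distribution \<mu>2 by (rule ss_cdf(1)[OF s2 bd])
  define H where "H y = cdf \<mu>1 y - cdf \<mu>2 y" for y
  note f = bdv_facts[OF bd]
  have Hz: "H y = 0" if "y < 0 \<or> y \<ge> 1" for y
    using that ss_class[OF s1 bd] ss_class[OF s2 bd] unfolding H_def by auto
  have Hfix: "H x = Top (length B) (digit_set B) H x" for x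
    unfolding H_def Top_diff[symmetric] using ss_cdf(2)[OF s1 bd] ss_cdf(2)[OF s2 bd] by metis
  have bnd: "\<bar>H x\<bar> \<le> (1/2) ^ n" for n x
  proof (induction n arbitrary: x)
    case 0
    show ?case unfolding H_def using r1.cdf_nonneg[of x] r2.cdf_nonneg[of x]
      r1.cdf_bounded_prob[of x] r2.cdf_bounded_prob[of x] by simp
  next
    case (Suc n)
    have "\<bar>Top (length B) (digit_set B) H x\<bar> \<le> (1/2)^n / 2"
      by (rule Top_contr[OF f(1-3)]) (use Hz Suc in auto)
    then show ?case using Hfix[of x] by simp
  qed
  have "H x = 0" for x
  proof (rule ccontr)
    assume "H x \<noteq> 0"
    then obtain n where "(1/2::real) ^ n < \<bar>H x\<bar>" using real_arch_pow_inv[of "\<bar>H x\<bar>" "1/2"] by auto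
    with bnd[of x n] show False by simp
  qed
  then have "cdf \<mu>1 = cdf \<mu>2" unfolding H_def by auto
  then show ?thesis using cdf_unique ss_cdf(1)[OF s1 bd] ss_cdf(1)[OF s2 bd] by blast
qed

lemma mu_B_eq:
  assumes bd: "binary_digit_vector B" and ss: "self_similar B \<mu>"
  shows "mu_B B = \<mu>"
  unfolding mu_B_def proof (rule the_equality)
  show "self_similar B \<mu>" by (rule ss)
  fix \<nu> assume "self_similar B \<nu>"
  then show "\<nu> = \<mu>" by (rule unique_ss[OF bd _ ss])
qed

lemma cdf_B_value:
  assumes bd: "binary_digit_vector B" and ss: "self_similar B \<mu>"
    and x0: "x \<ge> 0" and a1: "real a \<le> real (length B) * x" and a2: "real (length B) * x < real a + 1"
    and aD: "a \<notin> digit_set B"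
  shows "cdf_B B x = real (card {d\<in>digit_set B. d < a}) / real (bnorm B)"
proof -
  interpret real_distribution \<mu> by (rule ss_cdf(1)[OF ss bd])
  let ?F = "cdf \<mu>" and ?N = "length B" and ?D = "digit_set B"
  note cl = ss_class[OF ss bd]
  note f = bdv_facts[OF bd]
  have l1: "(?F \<longlongrightarrow> measure \<mu> {..<0}) (at_left 0)" by (rule cdf_at_left)
  have "\<forall>\<^sub>F z in at_left (0::real). ?F z = 0"
  proof -
    have "\<forall>\<^sub>F z in at_left (0::real). z \<in> {-1<..<0}" by (rule eventually_at_left_real) simp
    then show ?thesis by eventually_elim (auto intro: cl(1))
  qed
  then have l2: "(?F \<longlongrightarrow> 0) (at_left 0)" by (rule tendsto_eventually)
  have m0: "measure \<mu> {..<0} = 0" using tendsto_unique[OF _ l1 l2] by simp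
  have "measure \<mu> {..x} = measure \<mu> ({..<0} \<union> {0..x})"
    using x0 by (intro arg_cong[where f="measure \<mu>"]) auto
  also have "\<dots> = measure \<mu> {..<0} + measure \<mu> {0..x}"
    by (intro finite_measure_Union) auto
  finally have "cdf_B B x = ?F x" unfolding cdf_B_def mu_B_eq[OF bd ss] cdf_def using m0 by simp
  also have "\<dots> = (\<Sum>d\<in>?D. ?F (real ?N * x - real d)) / real (card ?D)"
    using ss_cdf(2)[OF ss bd] unfolding Top_def by metis
  also have "(\<Sum>d\<in>?D. ?F (real ?N * x - real d)) = (\<Sum>d\<in>?D. if d < a then 1 else 0)"
  proof (rule sum.cong)
    fix d assume d: "d \<in> ?D"
    show "?F (real ?N * x - real d) = (if d < a then 1 else 0)"
    proof (cases "d < a")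
      case True
      then have "real d + 1 \<le> real a" by linarith
      then show ?thesis using True cl(2) a1 by simp
    next
      case False
      then have "d > a" using aD d by (cases "d = a") auto
      then have "real d \<ge> real a + 1" by linarith
      then show ?thesis using False cl(1) a2 by simp
    qed
  qed simp
  also have "\<dots> = real (card {d\<in>?D. d < a})"
    by (simp add: sum.If_cases f(1)) (intro arg_cong[where f=card], auto)
  finally show ?thesis using f(4) by simp
qed

definition cls :: "(real \<Rightarrow> real) \<Rightarrow> bool" where
  "cls F \<longleftrightarrow> (\<forall>x y. x \<le> y \<longrightarrow> F x \<le> F y) \<and> (\<forall>y. y \<le> 0 \<longrightarrow> F y = 0) \<and> (\<forall>y. y \<ge> 1 \<longrightarrow> F y = 1)
     \<and> continuous_on UNIV F"

lemma cls_bounds: assumes "cls F" shows "0 \<le> F x" "F x \<le> 1"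
proof -
  have m: "\<And>x y. x \<le> y \<Longrightarrow> F x \<le> F y" and z: "F (min x 0) = 0" and o: "F (max x 1) = 1"
    using assms unfolding cls_def by auto
  show "0 \<le> F x" using m[of "min x 0" x] z by simp
  show "F x \<le> 1" using m[of x "max x 1"] o by simp
qed

lemma cls_Top:
  assumes fin: "finite D" and DN: "D \<subseteq> {..<N}" and cD: "card D \<ge> 2" and c: "cls F"
  shows "cls (Top N D F)"
proof -
  have m: "\<And>x y. x \<le> y \<Longrightarrow> F x \<le> F y" and z: "\<And>y. y \<le> 0 \<Longrightarrow> F y = 0"
    and o: "\<And>y. y \<ge> 1 \<Longrightarrow> F y = 1" and ct: "continuous_on UNIV F"
    using c unfolding cls_def by auto
  have cpos: "real (card D) > 0" using cD by simp
  have "Top N D F x \<le> Top N D F y" if "x \<le> y" for x y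
    unfolding Top_def using that cpos
    by (intro divide_right_mono sum_mono m) (auto intro: mult_left_mono)
  moreover have "Top N D F y = 0" if "y \<le> 0" for y
    unfolding Top_def
  proof -
    have "real N * y \<le> 0" using that by (simp add: mult_nonneg_nonpos)
    then have "(\<Sum>d\<in>D. F (real N * y - real d)) = 0"
      by (intro sum.neutral ballI z) simp
    then show "(\<Sum>d\<in>D. F (real N * y - real d)) / real (card D) = 0" by simp
  qed
  moreover have "Top N D F y = 1" if y: "y \<ge> 1" for y
    unfolding Top_def
  proof -
    have "(\<Sum>d\<in>D. F (real N * y - real d)) = (\<Sum>d\<in>D. 1)"
    proof (rule sum.cong)
      fix d assume "d \<in> D" then have "d < N" using DN by auto
      then have "real d + 1 \<le> real N" by linarith
      moreover have "real N * 1 \<le> real N * y" using y by (intro mult_left_mono) auto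
      ultimately show "F (real N * y - real d) = 1" by (intro o) linarith
    qed simp
    moreover have "card D > 0" using cD by linarith
    ultimately show "(\<Sum>d\<in>D. F (real N * y - real d)) / real (card D) = 1" by simp
  qed
  moreover have "continuous_on UNIV (Top N D F)"
    unfolding Top_def
    using cD by (intro continuous_intros continuous_on_compose2[OF ct]) auto
  ultimately show ?thesis unfolding cls_def by blast
qed

lemma exists_cdf:
  assumes fin: "finite D" and DN: "D \<subseteq> {..<N}" and cD: "card D \<ge> 2"
  shows "\<exists>F. cls F \<and> (\<forall>x. Top N D F x = F x)"
proof -
  define F0 :: "real \<Rightarrow> real" where "F0 x = max 0 (min 1 x)" for x
  have c0: "cls F0" unfolding cls_def F0_def
    by (intro conjI allI impI continuous_intros) auto
  define G where "G n = (Top N D ^^ n) F0" for n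
  have Gs: "G (Suc n) = Top N D (G n)" for n by (simp add: G_def)
  have cG: "cls (G n)" for n
    by (induction n) (simp_all add: G_def[symmetric] Gs c0 cls_Top[OF fin DN cD], simp add: G_def c0)
  have dif: "\<bar>G (Suc n) x - G n x\<bar> \<le> (1/2) ^ n" for n x
  proof (induction n arbitrary: x)
    case 0
    show ?case using cls_bounds[OF cG, of "Suc 0" x] cls_bounds[OF cG, of 0 x] by simp
  next
    case (Suc n)
    have "G (Suc (Suc n)) x - G (Suc n) x = Top N D (\<lambda>y. G (Suc n) y - G n y) x"
      unfolding Gs[of "Suc n"] Gs[of n] Top_diff by simp
    also have "\<bar>\<dots>\<bar> \<le> (1/2)^n / 2"
    proof (rule Top_contr[OF fin DN cD])
      fix y :: real assume "y < 0 \<or> y \<ge> 1"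
      then show "G (Suc n) y - G n y = 0"
        using cG[of n] cG[of "Suc n"] unfolding cls_def by auto
    qed (rule Suc)
    finally show ?case by simp
  qed
  define F where "F x = F0 x + (\<Sum>i. G (Suc i) x - G i x)" for x
  have summ: "summable (\<lambda>i. G (Suc i) x - G i x)" for x
    by (rule summable_comparison_test'[OF summable_geometric[of "1/2"]]) (use dif in auto)
  have tel: "(\<Sum>i<n. G (Suc i) x - G i x) = G n x - F0 x" for n x
  proof -
    have "(\<Sum>i<n. G (Suc i) x - G i x) = G n x - G 0 x" by (rule sum_lessThan_telescope)
    then show ?thesis by (simp add: G_def)
  qed
  have conv: "(\<lambda>n. G n x) \<longlonglongrightarrow> F x" for x
  proof -
    have "(\<lambda>n. F0 x + (\<Sum>i<n. G (Suc i) x - G i x)) \<longlonglongrightarrow> F x"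
      unfolding F_def by (intro tendsto_add tendsto_const summable_LIMSEQ summ)
    then show ?thesis unfolding tel by simp
  qed
  have ul: "uniform_limit UNIV (\<lambda>n x. \<Sum>i<n. G (Suc i) x - G i x) (\<lambda>x. \<Sum>i. G (Suc i) x - G i x) sequentially"
    by (rule Weierstrass_m_test[OF _ summable_geometric[of "1/2"]]) (use dif in auto)
  have "continuous_on UNIV (\<lambda>x. \<Sum>i. G (Suc i) x - G i x)"
  proof (rule uniform_limit_theorem[OF _ ul])
    show "\<forall>\<^sub>F n in sequentially. continuous_on UNIV (\<lambda>x. \<Sum>i<n. G (Suc i) x - G i x)"
    proof (rule always_eventually, rule allI)
      fix n
      have "continuous_on UNIV (G n)" "continuous_on UNIV F0" using cG[of n] c0 unfolding cls_def by auto
      then show "continuous_on UNIV (\<lambda>x. \<Sum>i<n. G (Suc i) x - G i x)"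
        unfolding tel by (intro continuous_on_diff)
    qed
  qed simp
  then have contF: "continuous_on UNIV F" unfolding F_def using c0 unfolding cls_def
    by (auto intro!: continuous_intros)
  have monoF: "F x \<le> F y" if "x \<le> y" for x y
    by (rule LIMSEQ_le[OF conv conv]) (use cG that in \<open>auto simp: cls_def\<close>)
  have z: "F y = 0" if "y \<le> 0" for y
  proof -
    have "(\<lambda>n. G n y) = (\<lambda>n. 0)" using cG that unfolding cls_def by auto
    then show ?thesis using conv[of y] LIMSEQ_const_iff by (metis)
  qed
  have o: "F y = 1" if "y \<ge> 1" for y
  proof -
    have "(\<lambda>n. G n y) = (\<lambda>n. 1)" using cG that unfolding cls_def by auto
    then show ?thesis using conv[of y] LIMSEQ_const_iff by (metis)
  qed
  have fx: "Top N D F x = F x" for x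
  proof -
    have "(\<lambda>n. G (Suc n) x) \<longlonglongrightarrow> F x" by (rule LIMSEQ_Suc[OF conv])
    moreover have "(\<lambda>n. G (Suc n) x) \<longlonglongrightarrow> Top N D F x"
      unfolding Gs Top_def using cD by (intro tendsto_intros conv) auto
    ultimately show ?thesis using LIMSEQ_unique by metis
  qed
  have "cls F" unfolding cls_def using monoF z o contF by blast
  then show ?thesis using fx by blast
qed

lemma exists_ss:
  assumes bd: "binary_digit_vector B"
  shows "\<exists>\<mu>. self_similar B \<mu>"
proof -
  let ?N = "length B" and ?D = "digit_set B"
  note f = bdv_facts[OF bd]
  obtain F where cF: "cls F" and fx: "\<And>x. Top ?N ?D F x = F x"
    using exists_cdf[OF f(1-3)] by blast
  have monoF: "\<And>x y. x \<le> y \<Longrightarrow> F x \<le> F y" and z: "\<And>y. y \<le> 0 \<Longrightarrow> F y = 0"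
    and o: "\<And>y. y \<ge> 1 \<Longrightarrow> F y = 1" and contF: "continuous_on UNIV F"
    using cF unfolding cls_def by auto
  have rc: "continuous (at_right a) F" for a
  proof -
    have "isCont F a" using contF by (simp add: continuous_on_eq_continuous_at)
    then show ?thesis by (rule continuous_at_imp_continuous_at_within)
  qed
  have bot: "(F \<longlongrightarrow> 0) at_bot"
    by (rule tendsto_eventually) (auto simp: eventually_at_bot_linorder intro!: exI[of _ 0] z)
  have top: "(F \<longlongrightarrow> 1) at_top"
    by (rule tendsto_eventually) (auto simp: eventually_at_top_linorder intro!: exI[of _ 1] o)
  define \<mu> where "\<mu> = interval_measure F"
  have rd: "real_distribution \<mu>" unfolding \<mu>_def
    by (rule real_distribution_interval_measure[OF monoF rc bot top])
  interpret real_distribution \<mu> by (rule rd)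
  have emI: "emeasure \<mu> {..y} = ennreal (F y)" for y
    unfolding \<mu>_def by (rule emeasure_interval_measure_Iic[OF monoF rc bot])
  have sb: "sets \<mu> = sets borel" by simp
  have phim: "phi B d \<in> borel_measurable \<mu>" for d
  proof -
    have "phi B d \<in> borel_measurable borel" unfolding phi_def by measurable
    then show ?thesis by simp
  qed
  define P where "P = measure_pmf (pmf_of_set ?D)"
  have Dne: "?D \<noteq> {}" using f(3) by auto
  define K where "K d = distr \<mu> borel (phi B d)" for d
  have Kp: "prob_space (K d)" for d unfolding K_def by (rule prob_space_distr[OF phim])
  have Km: "K \<in> measurable P (subprob_algebra borel)"
    unfolding P_def using Kp by (auto simp: space_subprob_algebra K_def intro: prob_space_imp_subprob_space)
  define \<nu> where "\<nu> = P \<bind> K"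
  have spP: "space P \<noteq> {}" unfolding P_def by simp
  have sn: "sets \<nu> = sets borel" unfolding \<nu>_def
    by (rule sets_bind[OF _ spP]) (simp add: K_def)
  have pn: "prob_space \<nu>" unfolding \<nu>_def P_def
    by (rule measure_pmf.prob_space_bind[OF _ Km[unfolded P_def]]) (simp add: Kp)
  have emn: "emeasure \<nu> A = (\<Sum>d\<in>?D. emeasure \<mu> (phi B d -` A)) / ennreal (real (bnorm B))"
    if A: "A \<in> sets borel" for A
  proof -
    have "emeasure \<nu> A = (\<integral>\<^sup>+d. emeasure (K d) A \<partial>P)"
      unfolding \<nu>_def by (rule emeasure_bind[OF spP Km A])
    also have "\<dots> = (\<Sum>d\<in>?D. emeasure (K d) A) / of_nat (card ?D)"
      unfolding P_def by (rule nn_integral_pmf_of_set[OF Dne f(1)])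
    also have "(\<Sum>d\<in>?D. emeasure (K d) A) = (\<Sum>d\<in>?D. emeasure \<mu> (phi B d -` A))"
      unfolding K_def using A phim by (intro sum.cong refl) (simp add: emeasure_distr)
    finally show ?thesis using f(4) by (simp add: ennreal_of_nat_eq_real_of_nat)
  qed
  have rdn: "real_distribution \<nu>" unfolding real_distribution_def real_distribution_axioms_def
    using sn pn by simp
  have N0: "real ?N > 0" using bd unfolding binary_digit_vector_def by auto
  have pre: "phi B d -` {..x} = {..real ?N * x - real d}" for d x
  proof -
    have "(t + real d) / real ?N \<le> x \<longleftrightarrow> t \<le> real ?N * x - real d" for t
      using N0 by (simp add: divide_le_eq algebra_simps)
    then show ?thesis unfolding phi_def by auto
  qed
  have F0: "0 \<le> F y" for y using cls_bounds[OF cF] by simp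
  have "cdf \<nu> x = F x" for x
  proof -
    have "emeasure \<nu> {..x} = (\<Sum>d\<in>?D. ennreal (F (real ?N * x - real d))) / ennreal (real (bnorm B))"
      using emn[of "{..x}"] by (simp add: pre emI)
    also have "\<dots> = ennreal ((\<Sum>d\<in>?D. F (real ?N * x - real d)) / real (bnorm B))"
      using f(3,4) by (subst sum_ennreal) (auto intro!: F0 sum_nonneg divide_ennreal)
    also have "\<dots> = ennreal (F x)" using fx[of x] f(4) unfolding Top_def by simp
    finally have "emeasure \<nu> {..x} = ennreal (F x)" .
    then show ?thesis unfolding cdf_def measure_def using F0 by simp
  qed
  moreover have "cdf \<mu> = F" unfolding \<mu>_def by (rule cdf_interval_measure[OF monoF rc bot])
  ultimately have "cdf \<nu> = cdf \<mu>" by auto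
  then have "\<nu> = \<mu>" using cdf_unique[OF rdn rd] by simp
  then have "self_similar B \<mu>" unfolding self_similar_def using sb prob_space_axioms emn by auto
  then show ?thesis by blast
qed

lemma build_B:
  assumes DN: "D \<subseteq> {..<N}" and N3: "N \<ge> 3" and c2: "card D \<ge> 2" and cN: "card D \<le> N - 1"
  defines "B \<equiv> map (\<lambda>i. if i \<in> D then 1 else 0) [0..<N]"
  shows "binary_digit_vector B" "digit_set B = D" "length B = N" "bnorm B = card D"
proof -
  show len: "length B = N" unfolding B_def by simp
  show ds: "digit_set B = D" unfolding digit_set_def B_def using DN by (auto split: if_splits)
  have sb: "set B \<subseteq> {0,1}" unfolding B_def by auto
  show bn: "bnorm B = card D" using bnorm_card[OF sb] ds by simp
  show "binary_digit_vector B" unfolding binary_digit_vector_def using len sb bn N3 c2 cN by simp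
qed



lemma choose_D:
  fixes I :: "nat set" and x :: "nat \<Rightarrow> real" and c :: "nat \<Rightarrow> nat" and M N :: nat and \<delta> :: real
  assumes fI: "finite I" and x01: "\<And>n. n \<in> I \<Longrightarrow> 0 < x n \<and> x n < 1"
    and cM: "\<And>n. n \<in> I \<Longrightarrow> c n \<le> M"
    and cmono: "\<And>m n. n \<in> I \<Longrightarrow> m \<in> I \<Longrightarrow> c n < c m \<Longrightarrow> x n < x m"
    and gap: "\<And>m n. n \<in> I \<Longrightarrow> m \<in> I \<Longrightarrow> x n < x m \<Longrightarrow> x m - x n \<ge> \<delta>"
    and lo: "\<And>n. n \<in> I \<Longrightarrow> x n \<ge> \<delta>" and hi: "\<And>n. n \<in> I \<Longrightarrow> 1 - x n \<ge> \<delta>"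
    and Nd: "real N * \<delta> \<ge> real M + 3" and d0: "\<delta> > 0" and d1: "\<delta> \<le> 1"
  shows "\<exists>D. D \<subseteq> {..<N} \<and> card D = M \<and>
           (\<forall>n\<in>I. nat \<lfloor>real N * x n\<rfloor> \<notin> D \<and> card {d\<in>D. d < nat \<lfloor>real N * x n\<rfloor>} = c n)"
proof -
  define A where "A t = \<lfloor>real N * t\<rfloor>" for t
  have Amono: "A s \<le> A t" if "s \<le> t" for s t
    unfolding A_def using that by (intro floor_mono mult_left_mono) auto
  have A1: "A 1 = int N" unfolding A_def by simp
  have g1: "A (x m) - A (x n) \<ge> int M + 2" if "n \<in> I" "m \<in> I" "x n < x m" for m n
  proof -
    have "real N * (x m - x n) \<ge> real N * \<delta>" using gap[OF that] by (intro mult_left_mono) auto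
    then have "real N * x m - real N * x n \<ge> real M + 3" using Nd by (simp add: algebra_simps)
    then show ?thesis unfolding A_def by linarith
  qed
  have g2: "A (x n) \<ge> int M + 2" if "n \<in> I" for n
  proof -
    have "real N * x n \<ge> real N * \<delta>" using lo[OF that] by (intro mult_left_mono) auto
    then show ?thesis using Nd unfolding A_def by linarith
  qed
  have g3: "int N - A (x n) \<ge> int M + 3" if "n \<in> I" for n
  proof -
    have "real N * (1 - x n) \<ge> real N * \<delta>" using hi[OF that] by (intro mult_left_mono) auto
    then have "real N - real N * x n \<ge> real M + 3" using Nd by (simp add: algebra_simps)
    moreover have "real_of_int (A (x n)) \<le> real N * x n" unfolding A_def by simp
    ultimately show ?thesis by linarith
  qed
  define S where "S j = insert 1 (x ` {n\<in>I. j < c n})" for j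
  define t where "t j = Min (S j)" for j
  have Sfin: "finite (S j)" "S j \<noteq> {}" for j unfolding S_def using fI by auto
  have t1: "t j = 1 \<or> (\<exists>m\<in>I. j < c m \<and> t j = x m)" for j
    using Min_in[OF Sfin, of j] unfolding t_def S_def by auto
  have t2: "t j \<le> x n" if "n \<in> I" "j < c n" for j n
    unfolding t_def using that by (intro Min_le[OF Sfin(1)]) (auto simp: S_def)
  have t3: "t j \<le> 1" for j unfolding t_def by (intro Min_le[OF Sfin(1)]) (auto simp: S_def)
  have t4: "t j \<le> t j'" if "j \<le> j'" for j j'
    unfolding t_def using that by (intro Min_antimono Sfin) (auto simp: S_def)
  have t5: "t j > x n" if "n \<in> I" "c n \<le> j" for j n
    using t1[of j]
  proof
    assume "t j = 1" then show ?thesis using x01[OF that(1)] by simp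
  next
    assume "\<exists>m\<in>I. j < c m \<and> t j = x m"
    then obtain m where m: "m \<in> I" "j < c m" "t j = x m" by blast
    then show ?thesis using cmono[OF that(1) m(1)] that(2) by simp
  qed
  have tA: "A (t j) \<ge> int M + 2" for j
    using t1[of j]
  proof
    assume "t j = 1"
    have "real N * 1 \<ge> real N * \<delta>" using d1 by (intro mult_left_mono) auto
    then have "real N \<ge> real M + 3" using Nd by linarith
    then show ?thesis using A1 \<open>t j = 1\<close> by simp
  next
    assume "\<exists>m\<in>I. j < c m \<and> t j = x m"
    then obtain m where m: "m \<in> I" "t j = x m" by blast
    then show ?thesis using g2[OF m(1)] by simp
  qed
  define P where "P j = A (t j) - int M + int j" for j
  have q1: "P j < A (x n)" if "n \<in> I" "j < M" "j < c n" for n j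
    using Amono[OF t2[OF that(1,3)]] that(2) unfolding P_def by linarith
  have q2: "P j > A (x n)" if "n \<in> I" "j < M" "c n \<le> j" for n j
    using t1[of j]
  proof
    assume "t j = 1" then have "A (t j) = int N" using A1 by simp
    then show ?thesis using g3[OF that(1)] unfolding P_def by linarith
  next
    assume "\<exists>m\<in>I. j < c m \<and> t j = x m"
    then obtain m where m: "m \<in> I" "j < c m" "t j = x m" by blast
    have "x n < x m" using t5[OF that(1,3)] m(3) by simp
    then have "int M + 2 \<le> A (t j) - A (x n)" using g1[OF that(1) m(1)] m(3) by simp
    then show ?thesis unfolding P_def by linarith
  qed
  have q3: "P j < P j'" if "j < j'" for j j'
  proof (cases "t j = t j'")
    case True then show ?thesis unfolding P_def using that by simp
  next
    case False
    then have lt: "t j < t j'" using t4[of j j'] that by simp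
    then have "t j \<noteq> 1" using t3[of j'] by simp
    then obtain m where m: "m \<in> I" "j < c m" "t j = x m" using t1[of j] by blast
    have "A (t j') - A (t j) \<ge> int M + 2" using t1[of j']
    proof
      assume "t j' = 1" then show ?thesis using g3[OF m(1)] A1 m(3) by simp
    next
      assume "\<exists>m\<in>I. j' < c m \<and> t j' = x m"
      then obtain m' where m': "m' \<in> I" "t j' = x m'" by blast
      show ?thesis using g1[OF m(1) m'(1)] lt m(3) m'(2) by simp
    qed
    then show ?thesis unfolding P_def using that by linarith
  qed
  have q4: "P j < int N" if "j < M" for j
    using Amono[OF t3[of j]] A1 that unfolding P_def by linarith
  have q5: "P j \<ge> 0" for j using tA[of j] unfolding P_def by linarith
  define p where "p j = nat (P j)" for j
  have pinj: "inj_on p {..<M}"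
  proof (rule inj_onI)
    fix i j assume "p i = p j"
    then have "P i = P j" unfolding p_def using q5 by (metis nat_eq_iff2)
    then show "i = j" using q3[of i j] q3[of j i] by (cases i j rule: linorder_cases) auto
  qed
  define D where "D = p ` {..<M}"
  have "D \<subseteq> {..<N}" unfolding D_def p_def using q4 q5 by (auto simp: nat_less_iff)
  moreover have "card D = M" unfolding D_def using card_image[OF pinj] by simp
  moreover have "nat \<lfloor>real N * x n\<rfloor> \<notin> D \<and> card {d\<in>D. d < nat \<lfloor>real N * x n\<rfloor>} = c n" if n: "n \<in> I" for n
  proof -
    have An: "A (x n) \<ge> 0" using g2[OF n] by linarith
    have notin: "nat (A (x n)) \<notin> D"
    proof
      assume "nat (A (x n)) \<in> D"
      then obtain j where j: "j < M" "nat (A (x n)) = p j" unfolding D_def by auto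
      then have "A (x n) = P j" unfolding p_def using An q5[of j] by simp
      then show False using q1[OF n j(1)] q2[OF n j(1)] by (cases "j < c n") auto
    qed
    have "{d\<in>D. d < nat (A (x n))} = p ` {..<c n}"
    proof -
      have "{d\<in>D. d < nat (A (x n))} = p ` {j\<in>{..<M}. p j < nat (A (x n))}" unfolding D_def by auto
      also have "{j\<in>{..<M}. p j < nat (A (x n))} = {..<c n}"
      proof (rule set_eqI, rule iffI)
        fix j assume "j \<in> {j\<in>{..<M}. p j < nat (A (x n))}"
        then have j: "j < M" "P j < A (x n)" unfolding p_def using q5[of j] An by auto
        then show "j \<in> {..<c n}" using q2[OF n j(1)] by (cases "j < c n") auto
      next
        fix j assume "j \<in> {..<c n}"
        then have j: "j < c n" "j < M" using cM[OF n] by auto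
        then show "j \<in> {j\<in>{..<M}. p j < nat (A (x n))}" using q1[OF n j(2,1)] q5[of j] unfolding p_def by auto
      qed
      finally show ?thesis .
    qed
    moreover have "card (p ` {..<c n}) = c n"
      using card_image[OF inj_on_subset[OF pinj]] cM[OF n] by auto
    ultimately show ?thesis using notin unfolding A_def by simp
  qed
  ultimately show ?thesis by blast
qed

theorem proposition2p4:
  fixes k :: nat and x y :: "nat \<Rightarrow> real"
  assumes rat: "\<And>n. n \<in> {1..k} \<Longrightarrow> x n \<in> \<rat> \<and> 0 < x n \<and> x n < 1 \<and> y n \<in> \<rat> \<and> 0 < y n \<and> y n < 1"
    and distinct: "\<And>m n. m \<in> {1..k} \<Longrightarrow> n \<in> {1..k} \<Longrightarrow> m \<noteq> n \<Longrightarrow> x m \<noteq> x n"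
    and mono: "\<And>m n. m \<in> {1..k} \<Longrightarrow> n \<in> {1..k} \<Longrightarrow> x m \<ge> x n \<Longrightarrow> y m \<ge> y n"
  shows "\<exists>B. binary_digit_vector B \<and> (\<forall>n \<in> {1..k}. cdf_B B (x n) = y n)"
proof -
  define I where "I = {1..k}"
  have fI: "finite I" unfolding I_def by simp
  have "\<forall>n\<in>I. \<exists>b::nat. b > 0 \<and> real b * y n \<in> \<int>"
  proof
    fix n assume "n \<in> I"
    then have "y n \<in> \<rat>" using rat unfolding I_def by auto
    then obtain a b where ab: "b > 0" "y n = of_int a / of_int b" by (rule Rats_cases') blast
    have "real (nat b) * y n = of_int a" using ab by simp
    then show "\<exists>b::nat. b > 0 \<and> real b * y n \<in> \<int>" using ab(1)
      by (intro exI[of _ "nat b"]) auto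
  qed
  from bchoice[OF this] obtain den where den0: "\<forall>n\<in>I. den n > 0 \<and> real (den n) * y n \<in> \<int>"
    by blast
  have den: "den n > 0 \<and> real (den n) * y n \<in> \<int>" if "n \<in> I" for n using den0 that by blast
  define M where "M = 2 * prod den I"
  have "prod den I > 0" using den by (intro prod_pos) auto
  then have p1: "prod den I \<ge> 1" by simp
  have M2: "M \<ge> 2" unfolding M_def using p1 by simp
  have Mint: "real M * y n \<in> \<int>" if n: "n \<in> I" for n
  proof -
    have "prod den I = den n * prod den (I - {n})" using prod.remove[OF fI n] by simp
    then have "real M * y n = (2 * real (prod den (I - {n}))) * (real (den n) * y n)"
      unfolding M_def by simp
    also have "\<dots> \<in> \<int>"
    proof (rule Ints_mult)
      show "2 * real (prod den (I - {n})) \<in> \<int>" by (intro Ints_mult) auto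
      show "real (den n) * y n \<in> \<int>" using den[OF n] by blast
    qed
    finally show ?thesis .
  qed
  define c where "c n = nat \<lfloor>real M * y n\<rfloor>" for n
  have y01: "0 < y n" "y n < 1" if "n \<in> I" for n using rat that unfolding I_def by auto
  have x01: "0 < x n \<and> x n < 1" if "n \<in> I" for n using rat that unfolding I_def by auto
  have cM: "real (c n) = real M * y n" if n: "n \<in> I" for n
  proof -
    obtain z where z: "real M * y n = of_int z" using Mint[OF n] by (rule Ints_cases)
    have "real M * y n > 0" using y01[OF n] M2 by simp
    then have "z \<ge> 0" using z by simp
    then show ?thesis unfolding c_def using z by simp
  qed
  have cleM: "c n \<le> M" if n: "n \<in> I" for n
  proof -
    have "real M * y n \<le> real M * 1" using y01[OF n] by (intro mult_left_mono) auto
    then show ?thesis using cM[OF n] by simp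
  qed
  have cmono: "x n < x m" if n: "n \<in> I" and m: "m \<in> I" and lt: "c n < c m" for m n
  proof (rule ccontr)
    assume "\<not> x n < x m"
    then have "x n \<ge> x m" by simp
    then have "y n \<ge> y m" using mono[of n m] n m unfolding I_def by blast
    then have "real M * y m \<le> real M * y n" by (intro mult_left_mono) auto
    then show False using cM[OF n] cM[OF m] lt by simp
  qed
  define Sd where "Sd = (\<lambda>(m, n). x m - x n) ` {(m, n). m \<in> I \<and> n \<in> I \<and> x n < x m}
     \<union> x ` I \<union> (\<lambda>n. 1 - x n) ` I \<union> {1}"
  have Sdfin: "finite Sd"
  proof -
    have "{(m, n). m \<in> I \<and> n \<in> I \<and> x n < x m} \<subseteq> I \<times> I" by auto
    then have "finite {(m, n). m \<in> I \<and> n \<in> I \<and> x n < x m}"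
      using fI by (meson finite_SigmaI finite_subset)
    then show ?thesis unfolding Sd_def using fI by simp
  qed
  have Sdne: "Sd \<noteq> {}" unfolding Sd_def by simp
  define \<delta> where "\<delta> = Min Sd"
  have Sdpos: "s > 0" if sS: "s \<in> Sd" for s
  proof -
    have "s \<in> (\<lambda>(m, n). x m - x n) ` {(m, n). m \<in> I \<and> n \<in> I \<and> x n < x m} \<or> s \<in> x ` I
      \<or> s \<in> (\<lambda>n. 1 - x n) ` I \<or> s = 1"
      using sS unfolding Sd_def Un_iff by simp
    then show ?thesis
    proof (elim disjE)
      assume "s \<in> (\<lambda>(m, n). x m - x n) ` {(m, n). m \<in> I \<and> n \<in> I \<and> x n < x m}"
      then obtain p where p: "p \<in> {(m, n). m \<in> I \<and> n \<in> I \<and> x n < x m}" "s = (\<lambda>(m, n). x m - x n) p"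
        by (rule imageE) simp
      obtain m n where "p = (m, n)" by (cases p)
      then show ?thesis using p by simp
    next
      assume "s \<in> x ` I"
      then obtain n where "n \<in> I" "s = x n" by blast
      then show ?thesis using x01 by simp
    next
      assume "s \<in> (\<lambda>n. 1 - x n) ` I"
      then obtain n where "n \<in> I" "s = 1 - x n" by blast
      then show ?thesis using x01 by simp
    qed simp
  qed
  have d0: "\<delta> > 0" unfolding \<delta>_def by (rule Sdpos[OF Min_in[OF Sdfin Sdne]])
  have dle: "\<delta> \<le> s" if "s \<in> Sd" for s unfolding \<delta>_def by (rule Min_le[OF Sdfin that])
  have d1: "\<delta> \<le> 1" using dle unfolding Sd_def by simp
  have gap: "x m - x n \<ge> \<delta>" if "n \<in> I" "m \<in> I" "x n < x m" for m n
  proof (rule dle)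
    have "(m, n) \<in> {(m, n). m \<in> I \<and> n \<in> I \<and> x n < x m}" using that by simp
    then have "(\<lambda>(m, n). x m - x n) (m, n) \<in> (\<lambda>(m, n). x m - x n) ` {(m, n). m \<in> I \<and> n \<in> I \<and> x n < x m}"
      by (rule imageI)
    then show "x m - x n \<in> Sd" unfolding Sd_def by simp
  qed
  have lo: "x n \<ge> \<delta>" if "n \<in> I" for n
    by (rule dle) (use that in \<open>simp add: Sd_def\<close>)
  have hi: "1 - x n \<ge> \<delta>" if "n \<in> I" for n
    by (rule dle) (use that in \<open>simp add: Sd_def\<close>)
  define N where "N = nat \<lceil>(real M + 3) / \<delta>\<rceil>"
  have "real N \<ge> (real M + 3) / \<delta>" unfolding N_def by linarith
  then have Nd: "real N * \<delta> \<ge> real M + 3" using d0 by (simp add: field_simps)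
  have "real N * 1 \<ge> real N * \<delta>" using d1 by (intro mult_left_mono) auto
  then have NM: "real N \<ge> real M + 3" using Nd by simp
  have "\<exists>D. D \<subseteq> {..<N} \<and> card D = M \<and>
           (\<forall>n\<in>I. nat \<lfloor>real N * x n\<rfloor> \<notin> D \<and> card {d\<in>D. d < nat \<lfloor>real N * x n\<rfloor>} = c n)"
    by (rule choose_D[OF fI x01 cleM cmono gap lo hi Nd d0 d1])
  then obtain D where D1: "D \<subseteq> {..<N}" and D2: "card D = M"
    and D3: "\<forall>n\<in>I. nat \<lfloor>real N * x n\<rfloor> \<notin> D \<and> card {d\<in>D. d < nat \<lfloor>real N * x n\<rfloor>} = c n"
    by (elim exE conjE)
  have D: "D \<subseteq> {..<N}" "card D = M"
    "\<And>n. n \<in> I \<Longrightarrow> nat \<lfloor>real N * x n\<rfloor> \<notin> D \<and> card {d\<in>D. d < nat \<lfloor>real N * x n\<rfloor>} = c n"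
    using D1 D2 D3 by auto
  define B :: "nat list" where "B = map (\<lambda>i. if i \<in> D then 1 else 0) [0..<N]"
  have N3: "N \<ge> 3" using NM M2 by linarith
  have cN: "card D \<le> N - 1" using NM D(2) by linarith
  have c2: "card D \<ge> 2" using D(2) M2 by simp
  note BB = build_B[OF D(1) N3 c2 cN, folded B_def]
  have bd: "binary_digit_vector B" and dsB: "digit_set B = D" and lB: "length B = N" and bnB: "bnorm B = M"
    using BB(1) BB(2) BB(3) BB(4) D(2) by simp_all
  obtain \<mu> where ss: "self_similar B \<mu>" using exists_ss[OF bd] by blast
  have "cdf_B B (x n) = y n" if n: "n \<in> I" for n
  proof -
    define a where "a = nat \<lfloor>real N * x n\<rfloor>"
    have xn: "x n \<ge> 0" using x01[OF n] by simp
    have "real N * x n \<ge> 0" using xn by simp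
    then have a1: "real a \<le> real N * x n" and a2: "real N * x n < real a + 1"
      unfolding a_def by linarith+
    have "cdf_B B (x n) = real (card {d\<in>digit_set B. d < a}) / real (bnorm B)"
      by (rule cdf_B_value[OF bd ss xn]) (use a1 a2 D(3)[OF n] in \<open>simp_all add: lB dsB a_def\<close>)
    also have "\<dots> = real (c n) / real M" using D(3)[OF n] unfolding dsB bnB a_def by simp
    also have "\<dots> = y n" using cM[OF n] M2 by simp
    finally show ?thesis .
  qed
  then show ?thesis using bd unfolding I_def by blast
qed


end
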